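(* There exist positive integers $n<m$ and a distribution $F$ such that the TWDPP mechanism is asymptotically stable with respect to $F^n$, but the UDPP mechanism is unstable (not asymptotically stable) with respect to $F^n$.
   Context: Dynamic posted-price setting: at each time step a block with $m$ slots is produced; $n$ bidders arrive with values drawn i.i.d. from $F$ (joint distribution $F^n$), each participating once and bidding truthfully. Given posted price $q>0$, $M(q)=\{i:b_i\ge q\}$. Both mechanisms use the random maximal allocation: $B$ is a uniformly random subset of $M(q)$ of size $\min\{m,|M(q)|\}$; each $i\in B$ gets a slot and pays $q$; the next price is $T(q,B)$. UDPP: $T_U(q,B)=\alpha\frac{|B|}{m}(1+\delta)q+(1-\alpha)q$. TWDPP: $T_{TW}(q,B)=\alpha\frac1m\sum_{i\in B}\min\{b_i,(1+\delta)q\}+(1-\alpha)q$ if $|B|<m$, and $\alpha(1+\delta)q+(1-\alpha)q$ if $|B|=m$. Here $\alpha\in(0,1)$, $\delta\in(0,\infty)$. Let $E_T(q)=\mathbb{E}[T(q,B)]$ over values and allocation; an equilibrium price is $z$ with $E_T(z)=z$. The mechanism is asymptotically stable with respect to $F^n$ if for every $q_0>0$ the sequence $q_{k+1}=E_T(q_k)$ converges to an equilibrium price; otherwise it is unstable. *)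

theory Defs
  imports "HOL-Probability.Probability"
begin

text \<open>Bidders are indexed by {..<n}; a bid profile is b :: nat \<Rightarrow> real.
  An update rule T takes the current price q, the bid profile b and the allocated set B.\<close>

definition eligible :: "nat \<Rightarrow> real \<Rightarrow> (nat \<Rightarrow> real) \<Rightarrow> nat set" where
  "eligible n q b = {i \<in> {..<n}. q \<le> b i}"

definition alloc_sets :: "nat \<Rightarrow> nat \<Rightarrow> real \<Rightarrow> (nat \<Rightarrow> real) \<Rightarrow> nat set set" where
  "alloc_sets n m q b =
     {B. B \<subseteq> eligible n q b \<and> card B = min m (card (eligible n q b))}"

definition T_U :: "real \<Rightarrow> real \<Rightarrow> nat \<Rightarrow> real \<Rightarrow> (nat \<Rightarrow> real) \<Rightarrow> nat set \<Rightarrow> real" where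
  "T_U \<alpha> \<delta> m q b B = \<alpha> * (real (card B) / real m) * (1 + \<delta>) * q + (1 - \<alpha>) * q"

definition T_TW :: "real \<Rightarrow> real \<Rightarrow> nat \<Rightarrow> real \<Rightarrow> (nat \<Rightarrow> real) \<Rightarrow> nat set \<Rightarrow> real" where
  "T_TW \<alpha> \<delta> m q b B =
     (if card B < m
      then \<alpha> * (1 / real m) * (\<Sum>i\<in>B. min (b i) ((1 + \<delta>) * q)) + (1 - \<alpha>) * q
      else \<alpha> * (1 + \<delta>) * q + (1 - \<alpha>) * q)"

definition expected_price ::
  "(real \<Rightarrow> (nat \<Rightarrow> real) \<Rightarrow> nat set \<Rightarrow> real) \<Rightarrow> nat \<Rightarrow> nat \<Rightarrow> real measure \<Rightarrow> real \<Rightarrow> real" where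
  "expected_price T n m F q =
     (\<integral>b. measure_pmf.expectation (pmf_of_set (alloc_sets n m q b)) (\<lambda>B. T q b B)
        \<partial>(PiM {..<n} (\<lambda>_. F)))"

definition equilibrium_price :: "(real \<Rightarrow> real) \<Rightarrow> real \<Rightarrow> bool" where
  "equilibrium_price E z \<longleftrightarrow> z > 0 \<and> E z = z"

definition asymptotically_stable :: "(real \<Rightarrow> real) \<Rightarrow> bool" where
  "asymptotically_stable E \<longleftrightarrow>
     (\<forall>q0 > 0. \<exists>z. equilibrium_price E z \<and> (\<lambda>k. (E ^^ k) q0) \<longlonglongrightarrow> z)"

end

theory Submission
  imports Defs
begin

lemma elig_meas:
  "eligible n q \<in> measurable (PiM {..<n} (\<lambda>_. borel :: real measure)) (count_space (Pow {..<n}))"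
proof (subst measurable_count_space_eq2)
  show "finite (Pow {..<n})" by simp
  show "eligible n q \<in> space (Pi\<^sub>M {..<n} (\<lambda>_. borel)) \<rightarrow> Pow {..<n} \<and>
    (\<forall>a\<in>Pow {..<n}. eligible n q -` {a} \<inter> space (Pi\<^sub>M {..<n} (\<lambda>_. borel)) \<in> sets (Pi\<^sub>M {..<n} (\<lambda>_. borel :: real measure)))"
  proof safe
    fix S assume "S \<subseteq> {..<n}"
    have "eligible n q -` {S} \<inter> space (Pi\<^sub>M {..<n} (\<lambda>_. borel :: real measure))
       = {b \<in> space (Pi\<^sub>M {..<n} (\<lambda>_. borel :: real measure)). \<forall>i\<in>{..<n}. (q \<le> b i) = (i \<in> S)}"
      using \<open>S \<subseteq> {..<n}\<close> unfolding eligible_def by blast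
    moreover have "Measurable.pred (Pi\<^sub>M {..<n} (\<lambda>_. borel :: real measure)) (\<lambda>b. \<forall>i\<in>{..<n}. (q \<le> b i) = (i \<in> S))"
    proof (rule pred_intros_finite)
      show "finite {..<n}" by simp
      fix i assume i: "i \<in> {..<n}"
      have m: "(\<lambda>b. b i) \<in> borel_measurable (Pi\<^sub>M {..<n} (\<lambda>_. borel :: real measure))"
        using i by (rule measurable_component_singleton)
      have "Measurable.pred (Pi\<^sub>M {..<n} (\<lambda>_. borel :: real measure)) (\<lambda>b. q \<le> b i)"
        using m by measurable
      then show "Measurable.pred (Pi\<^sub>M {..<n} (\<lambda>_. borel :: real measure)) (\<lambda>b. (q \<le> b i) = (i \<in> S))"
        by (cases "i \<in> S") auto
    qed
    ultimately have "eligible n q -` {S} \<inter> space (Pi\<^sub>M {..<n} (\<lambda>_. borel :: real measure)) \<in> sets (Pi\<^sub>M {..<n} (\<lambda>_. borel :: real measure))" by (simp only: pred_def)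
    then show "eligible n q -` {S} \<inter> space (Pi\<^sub>M {..<n} (\<lambda>_. borel :: real measure)) \<in> sets (Pi\<^sub>M {..<n} (\<lambda>_. borel))" by simp
  qed (auto simp: eligible_def)
qed


lemma integrand_meas:
  fixes T :: "real \<Rightarrow> (nat \<Rightarrow> real) \<Rightarrow> nat set \<Rightarrow> real"
  assumes T: "\<And>B. B \<subseteq> {..<n} \<Longrightarrow> (\<lambda>b. T q b B) \<in> borel_measurable (PiM {..<n} (\<lambda>_. borel :: real measure))"
  shows "(\<lambda>b. measure_pmf.expectation (pmf_of_set (alloc_sets n m q b)) (\<lambda>B. T q b B))
           \<in> borel_measurable (PiM {..<n} (\<lambda>_. borel :: real measure))"
proof -
  define A where "A S = {B. B \<subseteq> S \<and> card B = min m (card S)}" for S :: "nat set"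
  define h where "h S b = (\<Sum>B\<in>A S. T q b B) / real (card (A S))" for S b
  have fin: "finite (A S)" if "S \<subseteq> {..<n}" for S
    using that unfolding A_def
    by (metis (no_types, lifting) Collect_mono finite_Collect_subsets finite_lessThan finite_subset)
  have ne: "A S \<noteq> {}" if "S \<subseteq> {..<n}" for S
  proof -
    have "min m (card S) \<le> card S" by simp
    then obtain B where "B \<subseteq> S" "card B = min m (card S)" by (metis obtain_subset_with_card_n)
    then show ?thesis unfolding A_def by blast
  qed
  have el: "eligible n q b \<subseteq> {..<n}" for b unfolding eligible_def by blast
  have eq: "measure_pmf.expectation (pmf_of_set (alloc_sets n m q b)) (\<lambda>B. T q b B) = h (eligible n q b) b" for b
  proof -
    have "alloc_sets n m q b = A (eligible n q b)" unfolding alloc_sets_def A_def by simp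
    then show ?thesis unfolding h_def using fin[OF el] ne[OF el] by (simp add: integral_pmf_of_set)
  qed
  have "(\<lambda>b. h (eligible n q b) b) \<in> borel_measurable (PiM {..<n} (\<lambda>_. borel :: real measure))"
  proof (rule measurable_compose_countable'[OF _ elig_meas])
    fix S assume S: "S \<in> Pow {..<n}"
    have "(\<lambda>b. \<Sum>B\<in>A S. T q b B) \<in> borel_measurable (PiM {..<n} (\<lambda>_. borel :: real measure))"
    proof (rule borel_measurable_sum)
      fix B assume "B \<in> A S"
      then have "B \<subseteq> {..<n}" using S unfolding A_def by auto
      then show "(\<lambda>b. T q b B) \<in> borel_measurable (PiM {..<n} (\<lambda>_. borel :: real measure))" by (rule T)
    qed
    then show "(\<lambda>b. h S b) \<in> borel_measurable (PiM {..<n} (\<lambda>_. borel :: real measure))"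
      unfolding h_def by simp
  qed (simp add: countable_finite)
  then show ?thesis by (simp add: eq)
qed

lemma exp_point:
  fixes T :: "real \<Rightarrow> (nat \<Rightarrow> real) \<Rightarrow> nat set \<Rightarrow> real"
  assumes T: "\<And>B. B \<subseteq> {..<n} \<Longrightarrow> (\<lambda>b. T q b B) \<in> borel_measurable (PiM {..<n} (\<lambda>_. borel :: real measure))"
  shows "expected_price T n m (return borel (1::real)) q =
    measure_pmf.expectation (pmf_of_set (alloc_sets n m q (restrict (\<lambda>_. 1) {..<n}))) (\<lambda>B. T q (restrict (\<lambda>_. 1) {..<n}) B)"
proof -
  have "PiM {..<n} (\<lambda>i. return borel ((\<lambda>_. 1::real) i)) = return (PiM {..<n} (\<lambda>_. borel)) (restrict (\<lambda>_. 1::real) {..<n})"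
    by (rule PiM_return) auto
  then have P: "PiM {..<n} (\<lambda>_. return borel (1::real)) = return (PiM {..<n} (\<lambda>_. borel)) (restrict (\<lambda>_. 1::real) {..<n})"
    by simp
  show ?thesis unfolding expected_price_def P
    by (rule integral_return) (auto simp: space_PiM intro: integrand_meas T)
qed

lemma elig_one: "eligible n q (restrict (\<lambda>_. 1) {..<n}) = (if q \<le> 1 then {..<n} else {})"
  unfolding eligible_def by auto

lemma alloc_one:
  assumes "n \<le> m"
  shows "alloc_sets n m q (restrict (\<lambda>_. 1) {..<n}) = (if q \<le> 1 then {{..<n}} else {{}})"
proof -
  have "B = {..<n}" if "B \<subseteq> {..<n}" "card B = n" for B
    using that by (metis card_lessThan card_subset_eq finite_lessThan)
  then show ?thesis
    using assms unfolding alloc_sets_def elig_one by (auto simp: min_def)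
qed


locale dyn =
  fixes a d z :: real
  assumes a0: "0 < a" and a1: "a < 1" and d0: "0 < d" and z1: "z < 1" and zd: "1 < (1 + d) * z"
begin

definition f :: "real \<Rightarrow> real" where
  "f q = (if q \<le> 1 then a * z * min 1 ((1 + d) * q) + (1 - a) * q else (1 - a) * q)"

lemma z0: "0 < z"
proof (rule ccontr)
  assume "\<not> 0 < z"
  then have "(1 + d) * z \<le> 0" using d0 by (intro mult_nonneg_nonpos) auto
  then show False using zd by simp
qed

lemma fI: assumes "1 \<le> (1 + d) * p" "p \<le> 1"
  shows "f p = z + (1 - a) * (p - z)"
  using assms unfolding f_def by (simp add: algebra_simps)

lemma iterI:
  assumes "1 \<le> (1 + d) * p" "p \<le> 1"
  shows "(f ^^ k) p = z + (1 - a) ^ k * (p - z) \<and> 1 \<le> (1 + d) * (f ^^ k) p \<and> (f ^^ k) p \<le> 1"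
proof (induction k)
  case 0
  then show ?case using assms by simp
next
  case (Suc k)
  define p' where "p' = (f ^^ k) p"
  have h: "p' = z + (1 - a) ^ k * (p - z)" "1 \<le> (1 + d) * p'" "p' \<le> 1"
    using Suc unfolding p'_def by auto
  have e: "(f ^^ Suc k) p = z + (1 - a) * (p' - z)"
    using fI[OF h(2,3)] unfolding p'_def by simp
  have c: "(f ^^ Suc k) p = a * z + (1 - a) * p'" using e by (simp add: algebra_simps)
  have "1 \<le> (1 + d) * (a * z + (1 - a) * p')"
  proof -
    have "(1 + d) * (a * z + (1 - a) * p') = a * ((1 + d) * z) + (1 - a) * ((1 + d) * p')"
      by (simp add: algebra_simps)
    also have "\<dots> \<ge> a * 1 + (1 - a) * 1"
      using a0 a1 zd h(2) by (intro add_mono mult_left_mono) auto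
    finally show ?thesis by simp
  qed
  moreover have "a * z + (1 - a) * p' \<le> 1"
  proof -
    have "a * z + (1 - a) * p' \<le> a * 1 + (1 - a) * 1"
      using a0 a1 z1 h(3) by (intro add_mono mult_left_mono) auto
    then show ?thesis by simp
  qed
  moreover have "p' - z = (1 - a) ^ k * (p - z)" using h(1) by simp
  then have "(f ^^ Suc k) p = z + (1 - a) ^ Suc k * (p - z)" using e by (simp add: mult.assoc)
  ultimately show ?case using c by simp
qed

lemma reach1: "0 < q \<Longrightarrow> (1 - a) ^ N * q \<le> 1 \<Longrightarrow> \<exists>k. 0 < (f ^^ k) q \<and> (f ^^ k) q \<le> 1"
proof (induction N arbitrary: q)
  case 0
  then show ?case by (intro exI[of _ 0]) simp
next
  case (Suc N)
  show ?case
  proof (cases "q \<le> 1")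
    case True
    then show ?thesis using Suc by (intro exI[of _ 0]) simp
  next
    case False
    then have fq: "f q = (1 - a) * q" unfolding f_def by simp
    have "0 < (1 - a) * q" using a1 Suc.prems by simp
    moreover have "(1 - a) ^ N * ((1 - a) * q) \<le> 1" using Suc.prems by (simp add: algebra_simps)
    ultimately obtain k where "0 < (f ^^ k) ((1 - a) * q) \<and> (f ^^ k) ((1 - a) * q) \<le> 1"
      using Suc.IH by blast
    then show ?thesis using fq by (intro exI[of _ "Suc k"]) (simp add: funpow_Suc_right del: funpow.simps)
  qed
qed

definition r where "r = a * z * (1 + d) + (1 - a)"

lemma r1: "1 < r"
proof -
  have "a * 1 < a * (z * (1 + d))" using a0 zd by (intro mult_strict_left_mono) (auto simp: algebra_simps)
  then show ?thesis unfolding r_def by (simp add: algebra_simps)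
qed

lemma rd: "r < 1 + d"
proof -
  have "a * (z * (1 + d)) < a * (1 * (1 + d))" using a0 d0 z1 by (intro mult_strict_left_mono) auto
  then have "r < a * (1 + d) + (1 - a) * 1" unfolding r_def by (simp add: algebra_simps)
  also have "\<dots> \<le> a * (1 + d) + (1 - a) * (1 + d)" using a0 a1 d0 by (intro add_mono mult_left_mono) auto
  finally show ?thesis by (simp add: algebra_simps)
qed

lemma reach2: "0 < q \<Longrightarrow> q \<le> 1 \<Longrightarrow> 1 \<le> r ^ N * ((1 + d) * q) \<Longrightarrow>
   \<exists>k. 1 \<le> (1 + d) * (f ^^ k) q \<and> (f ^^ k) q \<le> 1"
proof (induction N arbitrary: q)
  case 0
  then show ?case by (intro exI[of _ 0]) simp
next
  case (Suc N)
  show ?case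
  proof (cases "1 \<le> (1 + d) * q")
    case True
    then show ?thesis using Suc by (intro exI[of _ 0]) simp
  next
    case False
    then have fq: "f q = r * q" using Suc.prems unfolding f_def r_def by (simp add: algebra_simps min_def)
    have "0 < r * q" using r1 Suc.prems by simp
    moreover have "r * q \<le> 1"
    proof -
      have "r * q \<le> (1 + d) * q" using rd Suc.prems by (intro mult_right_mono) auto
      then show ?thesis using False by simp
    qed
    moreover have "1 \<le> r ^ N * ((1 + d) * (r * q))" using Suc.prems by (simp add: algebra_simps)
    ultimately obtain k where "1 \<le> (1 + d) * (f ^^ k) (r * q) \<and> (f ^^ k) (r * q) \<le> 1"
      using Suc.IH by blast
    then show ?thesis using fq by (intro exI[of _ "Suc k"]) (simp add: funpow_Suc_right del: funpow.simps)
  qed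
qed

lemma reachI: assumes "0 < q" shows "\<exists>k. 1 \<le> (1 + d) * (f ^^ k) q \<and> (f ^^ k) q \<le> 1"
proof -
  obtain N where N: "(1 - a) ^ N < 1 / q" using real_arch_pow_inv[of "1 / q" "1 - a"] a0 assms by auto
  then have "(1 - a) ^ N * q \<le> 1" using assms by (simp add: field_simps)
  then obtain k where k: "0 < (f ^^ k) q" "(f ^^ k) q \<le> 1" using reach1 assms by blast
  define p where "p = (f ^^ k) q"
  obtain M where M: "1 / ((1 + d) * p) < r ^ M" using real_arch_pow[OF r1] by blast
  have pos: "0 < (1 + d) * p" using k d0 unfolding p_def by simp
  have "1 \<le> r ^ M * ((1 + d) * p)" using M pos by (simp add: divide_less_eq)
  then obtain j where j: "1 \<le> (1 + d) * (f ^^ j) p \<and> (f ^^ j) p \<le> 1" using reach2 k unfolding p_def by blast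
  have "(f ^^ (j + k)) q = (f ^^ j) p" unfolding p_def by (simp add: funpow_add)
  then show ?thesis using j by metis
qed

lemma converge: assumes "0 < q" shows "(\<lambda>k. (f ^^ k) q) \<longlonglongrightarrow> z"
proof -
  obtain k where k: "1 \<le> (1 + d) * (f ^^ k) q" "(f ^^ k) q \<le> 1" using reachI assms by blast
  define p where "p = (f ^^ k) q"
  have "(\<lambda>j. (f ^^ (j + k)) q) = (\<lambda>j. z + (1 - a) ^ j * (p - z))"
    using iterI[OF k] unfolding p_def by (simp add: funpow_add)
  moreover have "(\<lambda>j. z + (1 - a) ^ j * (p - z)) \<longlonglongrightarrow> z + 0 * (p - z)"
    using a0 a1 by (intro tendsto_intros LIMSEQ_power_zero) auto
  ultimately have "(\<lambda>j. (f ^^ (j + k)) q) \<longlonglongrightarrow> z" by simp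
  then show ?thesis by (rule LIMSEQ_offset)
qed

lemma fz: "f z = z"
  using fI[of z] zd z1 by simp

lemma stable: "asymptotically_stable f"
  unfolding asymptotically_stable_def equilibrium_price_def
  using converge fz z0 by blast

definition g :: "real \<Rightarrow> real" where
  "g q = (if q \<le> 1 then a * z * (1 + d) * q + (1 - a) * q else (1 - a) * q)"

lemma unstable: "\<not> asymptotically_stable g"
proof
  assume "asymptotically_stable g"
  then have "\<exists>w. 0 < w \<and> g w = w"
    unfolding asymptotically_stable_def equilibrium_price_def using zero_less_one by blast
  then obtain w where w: "0 < w" "g w = w" by blast
  show False
  proof (cases "w \<le> 1")
    case True
    then have "a * z * (1 + d) * w = a * w" using w unfolding g_def by (simp add: algebra_simps)
    then have "z * (1 + d) = 1" using a0 w by simp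
    then show False using zd by (simp add: algebra_simps)
  next
    case False
    then show False using w a0 unfolding g_def by simp
  qed
qed

end


lemma TW_meas:
  assumes "B \<subseteq> {..<n}"
  shows "(\<lambda>b. T_TW \<alpha> \<delta> m q b B) \<in> borel_measurable (PiM {..<n} (\<lambda>_. borel :: real measure))"
proof -
  have "(\<lambda>b. \<Sum>i\<in>B. min (b i) ((1 + \<delta>) * q)) \<in> borel_measurable (PiM {..<n} (\<lambda>_. borel :: real measure))"
  proof (rule borel_measurable_sum)
    fix i assume "i \<in> B"
    then have "i \<in> {..<n}" using assms by auto
    then have "(\<lambda>b. b i) \<in> borel_measurable (PiM {..<n} (\<lambda>_. borel :: real measure))"
      by (rule measurable_component_singleton)
    then show "(\<lambda>b. min (b i) ((1 + \<delta>) * q)) \<in> borel_measurable (PiM {..<n} (\<lambda>_. borel :: real measure))"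
      by (intro borel_measurable_min) auto
  qed
  then show ?thesis unfolding T_TW_def by (cases "card B < m") auto
qed

lemma U_meas:
  "(\<lambda>b. T_U \<alpha> \<delta> m q b B) \<in> borel_measurable (PiM {..<n} (\<lambda>_. borel :: real measure))"
  unfolding T_U_def by simp

lemma E_TW:
  assumes "n < m"
  shows "expected_price (T_TW \<alpha> \<delta> m) n m (return borel 1) =
    (\<lambda>q. if q \<le> 1 then \<alpha> * (real n / real m) * min 1 ((1 + \<delta>) * q) + (1 - \<alpha>) * q else (1 - \<alpha>) * q)"
proof
  fix q
  show "expected_price (T_TW \<alpha> \<delta> m) n m (return borel 1) q =
    (if q \<le> 1 then \<alpha> * (real n / real m) * min 1 ((1 + \<delta>) * q) + (1 - \<alpha>) * q else (1 - \<alpha>) * q)"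
    using assms
    by (subst exp_point[OF TW_meas]) (auto simp: alloc_one pmf_of_set_singleton T_TW_def)
qed

lemma E_U:
  assumes "n < m"
  shows "expected_price (T_U \<alpha> \<delta> m) n m (return borel 1) =
    (\<lambda>q. if q \<le> 1 then \<alpha> * (real n / real m) * (1 + \<delta>) * q + (1 - \<alpha>) * q else (1 - \<alpha>) * q)"
proof
  fix q
  show "expected_price (T_U \<alpha> \<delta> m) n m (return borel 1) q =
    (if q \<le> 1 then \<alpha> * (real n / real m) * (1 + \<delta>) * q + (1 - \<alpha>) * q else (1 - \<alpha>) * q)"
    using assms
    by (subst exp_point[OF U_meas]) (auto simp: alloc_one pmf_of_set_singleton T_U_def)
qed

theorem mainTheorem6:
  fixes \<alpha> \<delta> :: real
  assumes "0 < \<alpha>" "\<alpha> < 1" "0 < \<delta>"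
  shows "\<exists>(n::nat) (m::nat) (F::real measure).
           0 < n \<and> n < m \<and> prob_space F \<and> sets F = sets borel \<and>
           (AE x in F. 0 \<le> x) \<and>
           asymptotically_stable (expected_price (T_TW \<alpha> \<delta> m) n m F) \<and>
           \<not> asymptotically_stable (expected_price (T_U \<alpha> \<delta> m) n m F)"
proof -
  define n :: nat where "n = nat \<lceil>1 / \<delta>\<rceil> + 1"
  define m :: nat where "m = n + 1"
  have nd: "1 < \<delta> * real n"
  proof -
    have "1 / \<delta> < real n" unfolding n_def by linarith
    then show ?thesis using assms(3) by (simp add: divide_less_eq mult.commute)
  qed
  interpret D: dyn \<alpha> \<delta> "real n / real m"
  proof
    show "real n / real m < 1" unfolding m_def by simp
    have "real m < (1 + \<delta>) * real n" unfolding m_def using nd by (simp add: algebra_simps)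
    then show "1 < (1 + \<delta>) * (real n / real m)" unfolding m_def by (simp add: field_simps)
  qed (use assms in auto)
  have nm: "n < m" unfolding m_def by simp
  have "expected_price (T_TW \<alpha> \<delta> m) n m (return borel 1) = D.f"
    unfolding E_TW[OF nm] D.f_def by (simp add: mult.assoc)
  moreover have "expected_price (T_U \<alpha> \<delta> m) n m (return borel 1) = D.g"
    unfolding E_U[OF nm] D.g_def by (simp add: mult.assoc)
  ultimately show ?thesis
    using D.stable D.unstable nm
    by (intro exI[of _ n] exI[of _ m] exI[of _ "return borel (1::real)"])
       (auto simp: n_def prob_space_return AE_return)
qed

end
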